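(* Let $Q=\sum_{n\ge1}\frac{q_n}{n_\psi!}\partial_\psi^n$ be a $\partial_\psi$-delta operator (so $q_1\ne0$) with $\partial_\psi$-basic polynomial sequence $(p_n)_{n\ge0}$, and let $q(t)=\sum_{n\ge1}\frac{q_n}{n_\psi!}t^n\in F[[t]]$ with compositional inverse $q^{-1}(z)\in F[[z]]$. Then, as formal power series in $z$ with coefficients in $P$, $$\sum_{k\ge0}\frac{p_k(x)}{k_\psi!}z^k=\exp_\psi\{x\,q^{-1}(z)\},\qquad \exp_\psi(u):=\sum_{n\ge0}\frac{u^n}{n_\psi!}.$$
   Context: Let $F$ be a field of characteristic $0$, $P=F[x]$. Fix $(\psi_n)_{n\ge0}$ in $F$ with $\psi_0=1$, $\psi_n\ne0$, $\psi_{-1}=0$; $n_\psi=\psi_{n-1}/\psi_n$, $n_\psi!=1/\psi_n$, $0_\psi!=1$. $\partial_\psi x^n=n_\psi x^{n-1}$ (linear); $E^a(\partial_\psi)=\sum_k\frac{a^k}{k_\psi!}\partial_\psi^k$. A $\partial_\psi$-delta operator is a linear $Q:P\to P$ commuting with all $E^a(\partial_\psi)$, $a\in F$, with $Q(x)$ a nonzero constant. Its $\partial_\psi$-basic sequence: $\deg p_n=n$, $p_0=1$, $p_n(0)=0$ for $n>0$, $Qp_n=n_\psi p_{n-1}$. *)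

theory Defs
  imports "HOL-Computational_Algebra.Computational_Algebra"
begin

text \<open>Standing data: a sequence psi :: nat => 'a with psi 0 = 1, psi n \<noteq> 0;
  psi(-1) = 0 is encoded in n_psi 0 = 0.\<close>

definition psi_seq :: "(nat \<Rightarrow> 'a::field_char_0) \<Rightarrow> bool" where
  "psi_seq \<psi> \<longleftrightarrow> \<psi> 0 = 1 \<and> (\<forall>n. \<psi> n \<noteq> 0)"

definition n_psi :: "(nat \<Rightarrow> 'a::field_char_0) \<Rightarrow> nat \<Rightarrow> 'a" where
  "n_psi \<psi> n = (if n = 0 then 0 else \<psi> (n - 1) / \<psi> n)"

definition psi_fact :: "(nat \<Rightarrow> 'a::field_char_0) \<Rightarrow> nat \<Rightarrow> 'a" where
  "psi_fact \<psi> n = 1 / \<psi> n"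

definition psi_deriv :: "(nat \<Rightarrow> 'a::field_char_0) \<Rightarrow> 'a poly \<Rightarrow> 'a poly" where
  "psi_deriv \<psi> p = (\<Sum>n\<le>degree p. smult (coeff p n * n_psi \<psi> n) (monom 1 (n - 1)))"

text \<open>E^a(partial_psi) = sum_k a^k/k_psi! partial_psi^k (locally finite: partial_psi^k p = 0 for k > deg p).\<close>
definition psi_shift :: "(nat \<Rightarrow> 'a::field_char_0) \<Rightarrow> 'a \<Rightarrow> 'a poly \<Rightarrow> 'a poly" where
  "psi_shift \<psi> a p = (\<Sum>k\<le>degree p. smult (a ^ k / psi_fact \<psi> k) ((psi_deriv \<psi> ^^ k) p))"

definition psi_delta_op :: "(nat \<Rightarrow> 'a::field_char_0) \<Rightarrow> ('a poly \<Rightarrow> 'a poly) \<Rightarrow> bool" where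
  "psi_delta_op \<psi> Q \<longleftrightarrow>
     (\<forall>p r. Q (p + r) = Q p + Q r) \<and> (\<forall>c p. Q (smult c p) = smult c (Q p)) \<and>
     (\<forall>a p. Q (psi_shift \<psi> a p) = psi_shift \<psi> a (Q p)) \<and>
     (\<exists>c. c \<noteq> 0 \<and> Q [:0, 1:] = [:c:])"

definition psi_basic_seq :: "(nat \<Rightarrow> 'a::field_char_0) \<Rightarrow> ('a poly \<Rightarrow> 'a poly) \<Rightarrow> (nat \<Rightarrow> 'a poly) \<Rightarrow> bool" where
  "psi_basic_seq \<psi> Q p \<longleftrightarrow>
     (\<forall>n. degree (p n) = n) \<and> p 0 = 1 \<and> (\<forall>n>0. poly (p n) 0 = 0) \<and>
     (\<forall>n>0. Q (p n) = smult (n_psi \<psi> n) (p (n - 1)))"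

definition psi_series_op :: "(nat \<Rightarrow> 'a::field_char_0) \<Rightarrow> (nat \<Rightarrow> 'a) \<Rightarrow> 'a poly \<Rightarrow> 'a poly" where
  "psi_series_op \<psi> q p = (\<Sum>n\<in>{1..degree p}. smult (q n / psi_fact \<psi> n) ((psi_deriv \<psi> ^^ n) p))"

definition psi_indicator :: "(nat \<Rightarrow> 'a::field_char_0) \<Rightarrow> (nat \<Rightarrow> 'a) \<Rightarrow> 'a fps" where
  "psi_indicator \<psi> q = Abs_fps (\<lambda>n. if n = 0 then 0 else q n / psi_fact \<psi> n)"

definition exp_psi :: "(nat \<Rightarrow> 'a::field_char_0) \<Rightarrow> 'a poly fps" where
  "exp_psi \<psi> = Abs_fps (\<lambda>n. [: 1 / psi_fact \<psi> n :])"

end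

theory Submission
  imports Defs
begin

lemma coeff_psi_deriv:
  "coeff (psi_deriv \<psi> p) m = coeff p (Suc m) * n_psi \<psi> (Suc m)"
proof -
  have "coeff (psi_deriv \<psi> p) m = (\<Sum>n\<le>degree p. (coeff p n * n_psi \<psi> n) * (if n - 1 = m then 1 else 0))"
    unfolding psi_deriv_def by (simp add: coeff_sum coeff_monom)
  also have "\<dots> = (\<Sum>n\<le>degree p. if n = Suc m then coeff p n * n_psi \<psi> n else 0)"
    by (intro sum.cong) (auto simp: n_psi_def)
  also have "\<dots> = coeff p (Suc m) * n_psi \<psi> (Suc m)"
    by (auto simp: coeff_eq_0)
  finally show ?thesis .
qed

lemma coeff_psi_deriv_pow:
  assumes "psi_seq \<psi>"
  shows "coeff ((psi_deriv \<psi> ^^ n) p) m = coeff p (m + n) * \<psi> m / \<psi> (m + n)"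
proof (induction n arbitrary: m)
  case 0
  then show ?case using assms by (simp add: psi_seq_def)
next
  case (Suc n)
  have "coeff ((psi_deriv \<psi> ^^ Suc n) p) m = coeff p (Suc m + n) * \<psi> (Suc m) / \<psi> (Suc m + n) * n_psi \<psi> (Suc m)"
    by (simp add: coeff_psi_deriv Suc)
  also have "\<dots> = coeff p (m + Suc n) * \<psi> m / \<psi> (m + Suc n)"
    using assms by (simp add: n_psi_def psi_seq_def)
  finally show ?case .
qed

lemma coeff_series_op:
  assumes "psi_seq \<psi>" "degree r \<le> N"
  shows "coeff (psi_series_op \<psi> q r) m = (\<Sum>n\<in>{1..N}. q n * \<psi> n * coeff r (m + n) * \<psi> m / \<psi> (m + n))"
proof -
  have "coeff (psi_series_op \<psi> q r) m = (\<Sum>n\<in>{1..degree r}. q n * \<psi> n * coeff r (m + n) * \<psi> m / \<psi> (m + n))"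
    unfolding psi_series_op_def using assms(1)
    by (simp add: coeff_sum coeff_psi_deriv_pow psi_fact_def mult.assoc)
  also have "\<dots> = (\<Sum>n\<in>{1..N}. q n * \<psi> n * coeff r (m + n) * \<psi> m / \<psi> (m + n))"
    using assms(2) by (intro sum.mono_neutral_left) (auto simp: coeff_eq_0)
  finally show ?thesis .
qed

lemma const_poly_sum: "[:sum f A:] = (\<Sum>x\<in>A. [:f x:])"
proof (induction A rule: infinite_finite_induct)
  case (insert x F)
  then show ?case using add_pCons[of "f x" 0 "sum f F" 0] by simp
qed auto

lemma G_power_nth:
  "(Abs_fps (\<lambda>n. [: I $ n :]) ^ i) $ k = [: (I ^ i) $ k :]"
proof (induction i arbitrary: k)
  case 0
  then show ?case by (simp add: pCons_one)
next
  case (Suc i)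
  show ?case
    by (simp add: fps_mult_nth Suc const_poly_sum mult_to_poly mult.commute)
qed

lemma key_sum:
  fixes c I :: "'a::field fps"
  assumes c0: "c $ 0 = 0" and I0: "I $ 0 = 0" and inv: "c oo I = fps_X" and k: "k > 0"
  shows "(\<Sum>n\<in>{1..k}. c $ n * (I ^ (m + n)) $ k) = (I ^ m) $ (k - 1)"
proof -
  have z: "(I ^ j) $ k = 0" if "j > k" for j
    using startsby_zero_power_prefix[OF I0] that by auto
  have "(c * fps_X ^ m) oo I = (c oo I) * (fps_X ^ m oo I)"
    by (rule fps_compose_mult_distrib[OF I0])
  also have "\<dots> = fps_X * I ^ m"
    by (simp add: inv fps_X_power_compose[OF I0])
  finally have e: "((c * fps_X ^ m) oo I) $ k = (I ^ m) $ (k - 1)"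
    using k by (simp add: fps_X_mult_nth)
  have "((c * fps_X ^ m) oo I) $ k = (\<Sum>i=0..k. (if i < m then 0 else c $ (i - m)) * (I ^ i) $ k)"
    by (simp add: fps_compose_nth fps_X_power_mult_right_nth)
  also have "\<dots> = (\<Sum>i=0..m+k. (if i < m then 0 else c $ (i - m)) * (I ^ i) $ k)"
    by (intro sum.mono_neutral_left) (auto simp: z)
  also have "\<dots> = (\<Sum>i\<in>{m..m+k}. c $ (i - m) * (I ^ i) $ k)"
    by (intro sum.mono_neutral_cong_right) auto
  also have "\<dots> = (\<Sum>i\<in>(\<lambda>n. m + n) ` {0..k}. c $ (i - m) * (I ^ i) $ k)"
  proof -
    have "(\<lambda>n. m + n) ` {0..k} = {m..m+k}"
      by (auto simp: image_iff intro!: exI[of _ "x - m" for x])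
    then show ?thesis by (simp add: add.commute)
  qed
  also have "\<dots> = (\<Sum>n=0..k. c $ n * (I ^ (m + n)) $ k)"
    by (subst sum.reindex) (auto simp: inj_on_def)
  also have "\<dots> = (\<Sum>n\<in>{1..k}. c $ n * (I ^ (m + n)) $ k)"
    using c0 by (intro sum.mono_neutral_right) (auto, metis Suc_leI neq0_conv)
  finally show ?thesis using e by simp
qed

lemma kernel_series_op:
  assumes psi: "psi_seq \<psi>" and q1: "q 1 \<noteq> 0" and Z: "psi_series_op \<psi> q r = 0"
  shows "degree r = 0"
proof (rule ccontr)
  assume "degree r \<noteq> 0"
  then obtain d where d: "degree r = Suc d" by (cases "degree r") auto
  have nz: "\<And>n. \<psi> n \<noteq> 0" using psi by (simp add: psi_seq_def)
  have "coeff (psi_series_op \<psi> q r) d = (\<Sum>n\<in>{1..Suc d}. q n * \<psi> n * coeff r (d + n) * \<psi> d / \<psi> (d + n))"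
    by (rule coeff_series_op[OF psi]) (simp add: d)
  also have "\<dots> = q 1 * \<psi> 1 * coeff r (Suc d) * \<psi> d / \<psi> (Suc d)
      + (\<Sum>n\<in>{Suc 1..Suc d}. q n * \<psi> n * coeff r (d + n) * \<psi> d / \<psi> (d + n))"
    by (subst sum.atLeast_Suc_atMost) auto
  also have "(\<Sum>n\<in>{Suc 1..Suc d}. q n * \<psi> n * coeff r (d + n) * \<psi> d / \<psi> (d + n)) = 0"
    by (intro sum.neutral) (auto simp: coeff_eq_0 d)
  finally have "coeff (psi_series_op \<psi> q r) d = q 1 * \<psi> 1 * lead_coeff r * \<psi> d / \<psi> (Suc d)"
    by (simp add: d)
  moreover have "lead_coeff r \<noteq> 0"
  proof
    assume "lead_coeff r = 0"
    then have "r = 0" by simp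
    then show False using d by simp
  qed
  ultimately have "coeff (psi_series_op \<psi> q r) d \<noteq> 0" using q1 nz by simp
  with Z show False by simp
qed

theorem mainTheorem7:
  fixes \<psi> :: "nat \<Rightarrow> 'a::field_char_0"
    and q :: "nat \<Rightarrow> 'a"
    and p :: "nat \<Rightarrow> 'a poly"
  assumes psi: "psi_seq \<psi>"
    and q1: "q 1 \<noteq> 0"
    and delta: "psi_delta_op \<psi> (psi_series_op \<psi> q)"
    and basic: "psi_basic_seq \<psi> (psi_series_op \<psi> q) p"
  shows "Abs_fps (\<lambda>k. smult (1 / psi_fact \<psi> k) (p k))
         = exp_psi \<psi> oo (fps_const [:0, 1:] * Abs_fps (\<lambda>n. [: fps_inv (psi_indicator \<psi> q) $ n :]))"
proof -
  define c where "c = psi_indicator \<psi> q"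
  define I where "I = fps_inv c"
  define Q where "Q = psi_series_op \<psi> q"
  define s where "s k = (\<Sum>i\<le>k. monom (\<psi> i / \<psi> k * (I ^ i) $ k) i)" for k
  have nz: "\<And>n. \<psi> n \<noteq> 0" and psi0: "\<psi> 0 = 1" using psi by (auto simp: psi_seq_def)
  have c0: "c $ 0 = 0" by (simp add: c_def psi_indicator_def)
  have cn: "c $ n = q n * \<psi> n" if "n > 0" for n
    using that by (simp add: c_def psi_indicator_def psi_fact_def)
  have c1: "c $ 1 \<noteq> 0" using cn[of 1] q1 nz by simp
  have I0: "I $ 0 = 0" by (simp add: I_def fps_inv_def)
  have inv: "c oo I = fps_X" unfolding I_def by (rule fps_inv_right[OF c0 c1])
  have z: "(I ^ j) $ k = 0" if "j > k" for j k
    using startsby_zero_power_prefix[OF I0] that by auto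
  have coeff_s: "coeff (s k) j = \<psi> j / \<psi> k * (I ^ j) $ k" for k j
    by (auto simp: s_def coeff_sum coeff_monom z)
  have deg_s: "degree (s k) \<le> k" for k
    by (rule degree_le) (auto simp: coeff_s z)
  have Qs: "Q (s k) = smult (n_psi \<psi> k) (s (k - 1))" if k: "k > 0" for k
  proof (rule poly_eqI)
    fix m
    have "coeff (Q (s k)) m = (\<Sum>n\<in>{1..k}. q n * \<psi> n * coeff (s k) (m + n) * \<psi> m / \<psi> (m + n))"
      unfolding Q_def by (rule coeff_series_op[OF psi deg_s])
    also have "\<dots> = (\<Sum>n\<in>{1..k}. \<psi> m / \<psi> k * (c $ n * (I ^ (m + n)) $ k))"
      by (intro sum.cong refl) (auto simp: coeff_s cn nz)
    also have "\<dots> = \<psi> m / \<psi> k * (I ^ m) $ (k - 1)"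
      by (subst sum_distrib_left[symmetric], subst key_sum[OF c0 I0 inv k], rule refl)
    also have "\<dots> = coeff (smult (n_psi \<psi> k) (s (k - 1))) m"
      using k nz by (simp add: coeff_s n_psi_def)
    finally show "coeff (Q (s k)) m = coeff (smult (n_psi \<psi> k) (s (k - 1))) m" .
  qed
  have Qadd: "Q (a + b) = Q a + Q b" for a b using delta by (simp add: Q_def psi_delta_op_def)
  have Qdiff: "Q (a - b) = Q a - Q b" for a b
    using Qadd[of "a - b" b] by (simp add: algebra_simps)
  have ps: "p k = s k" for k
  proof (induction k rule: less_induct)
    case (less k)
    show ?case
    proof (cases "k = 0")
      case True
      have "s 0 = 1" using psi0 by (simp add: s_def)
      then show ?thesis using basic True by (simp add: psi_basic_seq_def)
    next
      case False
      have "Q (p k) = smult (n_psi \<psi> k) (p (k - 1))"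
        using basic False by (simp add: Q_def psi_basic_seq_def)
      then have "Q (p k - s k) = 0"
        using False less[of "k - 1"] Qs[of k] by (simp add: Qdiff)
      then have "degree (p k - s k) = 0"
        unfolding Q_def by (rule kernel_series_op[where q=q, OF psi q1])
      moreover have "coeff (p k - s k) 0 = 0"
      proof -
        have "coeff (p k) 0 = 0"
          using basic False by (simp add: psi_basic_seq_def flip: poly_0_coeff_0)
        moreover have "coeff (s k) 0 = 0" using False by (simp add: coeff_s)
        ultimately show ?thesis by simp
      qed
      ultimately have "p k - s k = 0"
        by (metis degree_0_id pCons_0_0)
      then show ?thesis by simp
    qed
  qed
  show ?thesis
  proof (rule fps_ext)
    fix k
    let ?G = "Abs_fps (\<lambda>n. [: I $ n :])"
    have "(exp_psi \<psi> oo (fps_const [:0, 1:] * ?G)) $ k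
        = (\<Sum>i=0..k. [:\<psi> i:] * ([:0, 1:] ^ i * [: (I ^ i) $ k :]))"
    proof -
      have gp: "(fps_const [:0, 1:] * ?G) ^ i = fps_const ([:0, 1:] ^ i) * ?G ^ i" for i
        by (simp only: power_mult_distrib fps_const_power)
      have gn: "((fps_const [:0, 1:] * ?G) ^ i) $ k = [:0, 1:] ^ i * [: (I ^ i) $ k :]" for i
        unfolding gp fps_mult_left_const_nth G_power_nth ..
      have en: "exp_psi \<psi> $ i = [:\<psi> i:]" for i
        by (simp add: exp_psi_def psi_fact_def)
      show ?thesis unfolding fps_compose_nth gn en ..
    qed
    also have "\<dots> = (\<Sum>i\<le>k. monom (\<psi> i * (I ^ i) $ k) i)"
    proof -
      have t: "[:\<psi> i:] * ([:0, 1:] ^ i * [: (I ^ i) $ k :]) = monom (\<psi> i * (I ^ i) $ k) i" for i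
        by (simp add: monom_altdef mult_pCons_left mult_pCons_right mult.commute)
      show ?thesis unfolding t by (simp add: atLeast0AtMost)
    qed
    also have "\<dots> = smult (\<psi> k) (s k)"
      using nz by (intro poly_eqI) (simp add: s_def coeff_sum coeff_monom sum_distrib_left)
    finally show "Abs_fps (\<lambda>k. smult (1 / psi_fact \<psi> k) (p k)) $ k
        = (exp_psi \<psi> oo (fps_const [:0, 1:] * Abs_fps (\<lambda>n. [: fps_inv (psi_indicator \<psi> q) $ n :]))) $ k"
      by (simp add: ps psi_fact_def I_def c_def)
  qed
qed

end
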